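(* Let $G=(\mathcal{V},\mathcal{E})$ be a connected undirected graph on $\mathcal{V}=\{1,\dots,n\}$, let $\mathcal{V}_c\subseteq\mathcal{V}$ be a set of corrupt nodes, $\mathcal{V}_h=\mathcal{V}\setminus\mathcal{V}_c$, and let $G_h=(\mathcal{V}_h,\mathcal{E}_h)$ be the subgraph induced on the honest nodes, with connected components having vertex sets $\mathcal{V}_{h,1},\dots,\mathcal{V}_{h,k_h}$. Consider any (message-passing) protocol on $G$ in which each node $j$ has a real input $s_j$ and private randomness $r_j$; in each round, every node sends to each of its neighbours a message that is a function of its input, its randomness and all messages it has received so far; at the end every node outputs a function of its input, randomness and received messages. Suppose the protocol is correct: for every choice of inputs and randomness, every node outputs $\sum_{j=1}^n s_j$. Define the view of the adversary in an execution as the inputs and randomness of the nodes in $\mathcal{V}_c$, all messages received by nodes in $\mathcal{V}_c$, and the output. Then for each $k=1,\dots,k_h$ the partial sum $\sum_{j\in\mathcal{V}_{h,k}}s_j$ is determined by the adversary's view: any two executions producing the same adversary view have the same value of $\sum_{j\in\mathcal{V}_{h,k}}s_j$ for every $k$.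
   Context: $\mathcal{E}_h=\{\{i,j\}\in\mathcal{E}: i,j\in\mathcal{V}_h\}$. Messages travel only along edges of $G$. *)

theory Defs
  imports Complex_Main
begin

text \<open>
A message-passing protocol with T rounds, message type 'm
and randomness type 'r is given by
  send t i j x \<rho> h : message sent in round t by node i to neighbour j, as a function of
                     i's input x, randomness \<rho> and history h of messages received so far;
  out j x \<rho> h     : output of node j from its input, randomness and received messages.
A history h :: nat \<Rightarrow> nat \<Rightarrow> 'm option maps (round t', sender l) to the message received
in round t' from l (None if nothing was received).
\<close>

definition simple_graph :: "nat \<Rightarrow> (nat \<Rightarrow> nat \<Rightarrow> bool) \<Rightarrow> bool" where
  "simple_graph n E \<longleftrightarrow>
     (\<forall>i j. E i j \<longrightarrow> i \<in> {1..n} \<and> j \<in> {1..n}) \<and>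
     (\<forall>i j. E i j \<longrightarrow> E j i) \<and> (\<forall>i. \<not> E i i)"

definition connected_graph :: "nat \<Rightarrow> (nat \<Rightarrow> nat \<Rightarrow> bool) \<Rightarrow> bool" where
  "connected_graph n E \<longleftrightarrow> (\<forall>u\<in>{1..n}. \<forall>v\<in>{1..n}. E\<^sup>*\<^sup>* u v)"

definition induced_component ::
  "(nat \<Rightarrow> nat \<Rightarrow> bool) \<Rightarrow> nat set \<Rightarrow> nat \<Rightarrow> nat set" where
  "induced_component E H v = {u \<in> H. (\<lambda>a b. E a b \<and> a \<in> H \<and> b \<in> H)\<^sup>*\<^sup>* v u}"

text \<open>hist E send s r t j = messages received by node j in rounds 0..t-1\<close>
primrec hist ::
  "(nat \<Rightarrow> nat \<Rightarrow> bool) \<Rightarrow>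
   (nat \<Rightarrow> nat \<Rightarrow> nat \<Rightarrow> real \<Rightarrow> 'r \<Rightarrow> (nat \<Rightarrow> nat \<Rightarrow> 'm option) \<Rightarrow> 'm) \<Rightarrow>
   (nat \<Rightarrow> real) \<Rightarrow> (nat \<Rightarrow> 'r) \<Rightarrow> nat \<Rightarrow> nat \<Rightarrow> (nat \<Rightarrow> nat \<Rightarrow> 'm option)" where
  "hist E send s r 0 = (\<lambda>j t' l. None)"
| "hist E send s r (Suc t) =
     (\<lambda>j t' l. if t' < t then hist E send s r t j t' l
               else if t' = t \<and> E l j then Some (send t l j (s l) (r l) (hist E send s r t l))
               else None)"

definition node_output ::
  "(nat \<Rightarrow> nat \<Rightarrow> bool) \<Rightarrow>
   (nat \<Rightarrow> nat \<Rightarrow> nat \<Rightarrow> real \<Rightarrow> 'r \<Rightarrow> (nat \<Rightarrow> nat \<Rightarrow> 'm option) \<Rightarrow> 'm) \<Rightarrow>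
   (nat \<Rightarrow> real \<Rightarrow> 'r \<Rightarrow> (nat \<Rightarrow> nat \<Rightarrow> 'm option) \<Rightarrow> real) \<Rightarrow> nat \<Rightarrow>
   (nat \<Rightarrow> real) \<Rightarrow> (nat \<Rightarrow> 'r) \<Rightarrow> nat \<Rightarrow> real" where
  "node_output E send out T s r j = out j (s j) (r j) (hist E send s r T j)"

definition correct_protocol where
  "correct_protocol n E send out T \<longleftrightarrow>
     (\<forall>s r. \<forall>j\<in>{1..n}. node_output E send out T s r j = (\<Sum>i\<in>{1..n}. s i))"

definition same_view where
  "same_view n E send out T Vc s r s' r' \<longleftrightarrow>
     (\<forall>j\<in>Vc. s j = s' j \<and> r j = r' j \<and> hist E send s r T j = hist E send s' r' T j) \<and>
     (\<forall>j\<in>{1..n}. node_output E send out T s r j = node_output E send out T s' r' j)"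

end

theory Submission
  imports Defs
begin

lemma hist_none: "t \<le> t' \<Longrightarrow> hist E send s r t j t' l = None"
  by (induction t arbitrary: j) auto

lemma hist_mono: "t \<le> u \<Longrightarrow> t' < t \<Longrightarrow> hist E send s r u j t' l = hist E send s r t j t' l"
proof (induction u)
  case 0 then show ?case by simp
next
  case (Suc u)
  show ?case
  proof (cases "t = Suc u")
    case False
    then have "t \<le> u" using Suc by simp
    then show ?thesis using Suc by auto
  qed simp
qed

lemma hist_eq_le:
  assumes "hist E send s r T j = hist E send s' r' T j" "t \<le> T"
  shows "hist E send s r t j = hist E send s' r' t j"
proof (intro ext)
  fix t' l
  show "hist E send s r t j t' l = hist E send s' r' t j t' l"
  proof (cases "t' < t")
    case True
    then show ?thesis using hist_mono[OF assms(2) True, of E send s r j l]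
        hist_mono[OF assms(2) True, of E send s' r' j l] assms(1) by metis
  qed (simp add: hist_none)
qed

theorem proposition1:
  fixes n :: nat and E :: "nat \<Rightarrow> nat \<Rightarrow> bool" and Vc :: "nat set" and T :: nat
    and send :: "nat \<Rightarrow> nat \<Rightarrow> nat \<Rightarrow> real \<Rightarrow> 'r \<Rightarrow> (nat \<Rightarrow> nat \<Rightarrow> 'm option) \<Rightarrow> 'm"
    and out :: "nat \<Rightarrow> real \<Rightarrow> 'r \<Rightarrow> (nat \<Rightarrow> nat \<Rightarrow> 'm option) \<Rightarrow> real"
    and s s' :: "nat \<Rightarrow> real" and r r' :: "nat \<Rightarrow> 'r" and v :: nat
  assumes "simple_graph n E"
    and "connected_graph n E"
    and "Vc \<subseteq> {1..n}"
    and "correct_protocol n E send out T"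
    and "same_view n E send out T Vc s r s' r'"
    and "v \<in> {1..n} - Vc"
  shows "(\<Sum>j\<in>induced_component E ({1..n} - Vc) v. s j)
       = (\<Sum>j\<in>induced_component E ({1..n} - Vc) v. s' j)"
proof -
  define H where "H = {1..n} - Vc"
  define C where "C = induced_component E H v"
  have CH: "C \<subseteq> H" unfolding C_def induced_component_def by auto
  have vC: "v \<in> C" using assms(6) unfolding C_def H_def induced_component_def by auto
  have Ein: "\<And>i j. E i j \<Longrightarrow> i \<in> {1..n} \<and> j \<in> {1..n}" and Esym: "\<And>i j. E i j \<Longrightarrow> E j i"
    using assms(1) unfolding simple_graph_def by blast+
  have closed: "l \<in> Vc" if "j \<in> C" "E j l" "l \<notin> C" for j l
  proof (rule ccontr)
    assume "l \<notin> Vc"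
    then have lH: "l \<in> H" using Ein[OF that(2)] H_def by auto
    have jH: "j \<in> H" using that(1) CH by auto
    have "(\<lambda>a b. E a b \<and> a \<in> H \<and> b \<in> H)\<^sup>*\<^sup>* v j" using that(1) unfolding C_def induced_component_def by auto
    then have "(\<lambda>a b. E a b \<and> a \<in> H \<and> b \<in> H)\<^sup>*\<^sup>* v l"
      using that(2) lH jH by (simp add: rtranclp.rtrancl_into_rtrancl)
    then have "l \<in> C" using lH unfolding C_def induced_component_def by auto
    then show False using that(3) by simp
  qed
  have view: "\<And>j. j \<in> Vc \<Longrightarrow> s j = s' j \<and> r j = r' j \<and> hist E send s r T j = hist E send s' r' T j"
    and outs: "\<And>j. j \<in> {1..n} \<Longrightarrow> node_output E send out T s r j = node_output E send out T s' r' j"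
    using assms(5) unfolding same_view_def by blast+
  define s2 where "s2 = (\<lambda>i. if i \<in> C then s i else s' i)"
  define r2 where "r2 = (\<lambda>i. if i \<in> C then r i else r' i)"
  have main: "t \<le> T \<Longrightarrow> (\<forall>j\<in>C. hist E send s2 r2 t j = hist E send s r t j) \<and>
                       (\<forall>j. j \<notin> C \<longrightarrow> hist E send s2 r2 t j = hist E send s' r' t j)" for t
  proof (induction t)
    case 0 then show ?case by simp
  next
    case (Suc t)
    then have IH1: "\<And>j. j \<in> C \<Longrightarrow> hist E send s2 r2 t j = hist E send s r t j"
      and IH2: "\<And>j. j \<notin> C \<Longrightarrow> hist E send s2 r2 t j = hist E send s' r' t j"
      and tT: "t < T" by auto
    have vc_t: "\<And>j. j \<in> Vc \<Longrightarrow> hist E send s r t j = hist E send s' r' t j"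
      using view hist_eq_le tT by (metis less_imp_le)
    have A: "hist E send s2 r2 (Suc t) j = hist E send s r (Suc t) j" if jC: "j \<in> C" for j
    proof (intro ext)
      fix t' l
      show "hist E send s2 r2 (Suc t) j t' l = hist E send s r (Suc t) j t' l"
      proof (cases "t' = t \<and> E l j \<and> \<not> t' < t")
        case True
        show ?thesis
        proof (cases "l \<in> C")
          case True
          then show ?thesis using IH1 \<open>t' = t \<and> E l j \<and> \<not> t' < t\<close> by (simp add: s2_def r2_def)
        next
          case False
          then have "l \<in> Vc" using closed jC Esym True by blast
          then show ?thesis using False IH2 view[of l] vc_t[of l] True by (simp add: s2_def r2_def)
        qed
      qed (auto simp: IH1 jC)
    qed
    have B: "hist E send s2 r2 (Suc t) j = hist E send s' r' (Suc t) j" if jC: "j \<notin> C" for j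
    proof (intro ext)
      fix t' l
      show "hist E send s2 r2 (Suc t) j t' l = hist E send s' r' (Suc t) j t' l"
      proof (cases "t' = t \<and> E l j \<and> \<not> t' < t")
        case True
        show ?thesis
        proof (cases "l \<in> C")
          case False
          then show ?thesis using IH2 True by (simp add: s2_def r2_def)
        next
          case lC: True
          then have jV: "j \<in> Vc" using closed jC True by blast
          have "hist E send s r (Suc t) j t l = hist E send s' r' (Suc t) j t l"
            using hist_eq_le[of E send s r T j s' r' "Suc t"] view[OF jV] tT by simp
          then show ?thesis using lC IH1 True by (simp add: s2_def r2_def)
        qed
      qed (auto simp: IH2 jC)
    qed
    show ?case using A B by blast
  qed
  have fin: "finite C" using CH H_def by (meson finite_atLeastAtMost finite_Diff finite_subset)
  have Cn: "C \<subseteq> {1..n}" using CH H_def by auto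
  have vn: "v \<in> {1..n}" using assms(6) by auto
  have corr: "\<And>s r. node_output E send out T s r v = (\<Sum>i\<in>{1..n}. s i)"
    using assms(4) vn unfolding correct_protocol_def by blast
  have "node_output E send out T s2 r2 v = node_output E send out T s r v"
    using main[of T] vC unfolding node_output_def by (simp add: s2_def r2_def)
  then have e1: "(\<Sum>i\<in>{1..n}. s2 i) = (\<Sum>i\<in>{1..n}. s' i)"
    using corr outs[OF vn] by metis
  have split: "\<And>f::nat\<Rightarrow>real. (\<Sum>i\<in>{1..n}. f i) = (\<Sum>i\<in>C. f i) + (\<Sum>i\<in>{1..n}-C. f i)"
    using Cn by (metis add.commute finite_atLeastAtMost sum.subset_diff)
  have "(\<Sum>i\<in>C. s2 i) = (\<Sum>i\<in>C. s i)" by (simp add: s2_def)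
  moreover have "(\<Sum>i\<in>{1..n}-C. s2 i) = (\<Sum>i\<in>{1..n}-C. s' i)" by (simp add: s2_def)
  ultimately have "(\<Sum>i\<in>C. s i) = (\<Sum>i\<in>C. s' i)" using e1 split[of s2] split[of s'] by linarith
  then show ?thesis unfolding C_def H_def .
qed

end
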